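(* Let $M$ be a $(B,A)$-bimodule with $M_A$ finitely generated projective, $S=\mathrm{End}_A(M)$, and $\mathcal{C}=M^*\otimes_BM$ the comatrix $A$-coring. Suppose $\gamma:\mathcal{C}\otimes_A\mathcal{C}\to A$ is a pre-cointegral for $\mathcal{C}$. Identify $S\cong M\otimes_AM^*$ (via $m\otimes\varphi\mapsto(x\mapsto m\varphi(x))$), so that $S\otimes_BS\otimes_BS\cong M\otimes_A\mathcal{C}\otimes_A\mathcal{C}\otimes_AM^*$, and define $\tilde\gamma:S\otimes_BS\otimes_BS\to S$ by $\tilde\gamma(m\otimes\varphi\otimes m'\otimes\varphi'\otimes m''\otimes\varphi'')=m\,\gamma(\varphi\otimes m'\otimes\varphi'\otimes m'')\otimes\varphi''$ (i.e. $\tilde\gamma=M\otimes\gamma\otimes M^*$ followed by $M\otimes_AA\otimes_AM^*\cong M\otimes_AM^*$). Then $\tilde\gamma$, regarded as a map $(S\otimes_BS)\otimes_S(S\otimes_BS)\cong S\otimes_BS\otimes_BS\to S$, is a pre-cointegral for the Sweedler $S$-coring $S\otimes_BS$.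
   Context: All rings are associative with $1$. For a $(B,A)$-bimodule $M$ with $M_A$ finitely generated projective, $M^*=\mathrm{Hom}_A(M,A)$ is an $(A,B)$-bimodule, and with a finite dual basis $\{e_i,e_i^*\}_{i\in I}$ the comatrix $A$-coring is $M^*\otimes_BM$ with coproduct $\varphi\otimes m\mapsto\sum_i\varphi\otimes e_i\otimes e_i^*\otimes m$ and counit $\varphi\otimes m\mapsto\varphi(m)$. $S=\mathrm{End}_A(M)$ with composition, and $B\to S$, $b\mapsto(m\mapsto bm)$. The Sweedler $S$-coring $S\otimes_BS$ has coproduct $s\otimes s'\mapsto s\otimes1_S\otimes s'$ and counit $s\otimes s'\mapsto ss'$. For an $A$-coring $\mathcal{C}$ with coproduct $\Delta(c)=\sum c_{(1)}\otimes c_{(2)}$, a pre-cointegral is an $(A,A)$-bimodule map $\gamma:\mathcal{C}\otimes_A\mathcal{C}\to A$ such that $\sum c_{(1)}\gamma(c_{(2)}\otimes c')=\sum\gamma(c\otimes c'_{(1)})c'_{(2)}$ for all $c,c'\in\mathcal{C}$. *)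

theory Defs
  imports Main "HOL-Library.Function_Algebras"
begin

text \<open>The free abelian group on X x Y is modelled by finitely supported functions
  X x Y -> int; a formal sum (list of pairs) is mapped to its indicator-count function.
  X \<otimes>_R Y is the quotient by the subgroup generated by the usual bilinearity and
  R-balancing relations; two formal sums are equal in X \<otimes>_R Y iff their difference
  lies in that subgroup.\<close>

definition fsingle :: "'p \<Rightarrow> 'p \<Rightarrow> int" where
  "fsingle p = (\<lambda>q. if q = p then 1 else 0)"

definition formal :: "'p list \<Rightarrow> 'p \<Rightarrow> int" where
  "formal xs = sum_list (map fsingle xs)"

inductive_set tensor_rels ::
  "'x::ab_group_add set \<Rightarrow> 'y::ab_group_add set \<Rightarrow> ('x \<Rightarrow> 'r \<Rightarrow> 'x) \<Rightarrow> ('r \<Rightarrow> 'y \<Rightarrow> 'y)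
     \<Rightarrow> ('x \<times> 'y \<Rightarrow> int) set"
  for X Y rx ly where
  zero: "0 \<in> tensor_rels X Y rx ly"
| add: "u \<in> tensor_rels X Y rx ly \<Longrightarrow> v \<in> tensor_rels X Y rx ly \<Longrightarrow> u + v \<in> tensor_rels X Y rx ly"
| neg: "u \<in> tensor_rels X Y rx ly \<Longrightarrow> - u \<in> tensor_rels X Y rx ly"
| addl: "x \<in> X \<Longrightarrow> x' \<in> X \<Longrightarrow> y \<in> Y \<Longrightarrow>
     fsingle (x + x', y) - fsingle (x, y) - fsingle (x', y) \<in> tensor_rels X Y rx ly"
| addr: "x \<in> X \<Longrightarrow> y \<in> Y \<Longrightarrow> y' \<in> Y \<Longrightarrow>
     fsingle (x, y + y') - fsingle (x, y) - fsingle (x, y') \<in> tensor_rels X Y rx ly"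
| bal: "x \<in> X \<Longrightarrow> y \<in> Y \<Longrightarrow>
     fsingle (rx x r, y) - fsingle (x, ly r y) \<in> tensor_rels X Y rx ly"

definition tensor_eq ::
  "'x::ab_group_add set \<Rightarrow> 'y::ab_group_add set \<Rightarrow> ('x \<Rightarrow> 'r \<Rightarrow> 'x) \<Rightarrow> ('r \<Rightarrow> 'y \<Rightarrow> 'y)
     \<Rightarrow> ('x \<times> 'y) list \<Rightarrow> ('x \<times> 'y) list \<Rightarrow> bool" where
  "tensor_eq X Y rx ly xs ys \<longleftrightarrow> formal xs - formal ys \<in> tensor_rels X Y rx ly"

definition bimodule :: "('b::ring_1 \<Rightarrow> 'm::ab_group_add \<Rightarrow> 'm) \<Rightarrow> ('m \<Rightarrow> 'a::ring_1 \<Rightarrow> 'm) \<Rightarrow> bool" where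
  "bimodule lact ract \<longleftrightarrow>
     (\<forall>b m m'. lact b (m + m') = lact b m + lact b m') \<and>
     (\<forall>b b' m. lact (b + b') m = lact b m + lact b' m) \<and>
     (\<forall>b b' m. lact (b * b') m = lact b (lact b' m)) \<and>
     (\<forall>m. lact 1 m = m) \<and>
     (\<forall>a m m'. ract (m + m') a = ract m a + ract m' a) \<and>
     (\<forall>a a' m. ract m (a + a') = ract m a + ract m a') \<and>
     (\<forall>a a' m. ract m (a * a') = ract (ract m a) a') \<and>
     (\<forall>m. ract m 1 = m) \<and>
     (\<forall>b m a. lact b (ract m a) = ract (lact b m) a)"

definition dual :: "('m::ab_group_add \<Rightarrow> 'a::ring_1 \<Rightarrow> 'm) \<Rightarrow> ('m \<Rightarrow> 'a) set" where
  "dual ract = {\<phi>. (\<forall>m m'. \<phi> (m + m') = \<phi> m + \<phi> m') \<and> (\<forall>m a. \<phi> (ract m a) = \<phi> m * a)}"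

text \<open>S = End_A(M), right A-linear endomorphisms, with multiplication = composition.\<close>
definition endo :: "('m::ab_group_add \<Rightarrow> 'a::ring_1 \<Rightarrow> 'm) \<Rightarrow> ('m \<Rightarrow> 'm) set" where
  "endo ract = {s. (\<forall>m m'. s (m + m') = s m + s m') \<and> (\<forall>m a. s (ract m a) = ract (s m) a)}"

definition dual_basis ::
  "('m::ab_group_add \<Rightarrow> 'a::ring_1 \<Rightarrow> 'm) \<Rightarrow> nat \<Rightarrow> (nat \<Rightarrow> 'm) \<Rightarrow> (nat \<Rightarrow> 'm \<Rightarrow> 'a) \<Rightarrow> bool" where
  "dual_basis ract n e es \<longleftrightarrow> (\<forall>i<n. es i \<in> dual ract) \<and> (\<forall>m. m = (\<Sum>i<n. ract (e i) (es i m)))"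

text \<open>Equality in C = M^* \<otimes>_B M; right B-action on M^* is (phi b)(m) = phi(b m).\<close>
definition tensorC :: "('b::ring_1 \<Rightarrow> 'm::ab_group_add \<Rightarrow> 'm) \<Rightarrow> ('m \<Rightarrow> 'a::ring_1 \<Rightarrow> 'm)
    \<Rightarrow> (('m \<Rightarrow> 'a) \<times> 'm) list \<Rightarrow> (('m \<Rightarrow> 'a) \<times> 'm) list \<Rightarrow> bool" where
  "tensorC lact ract = tensor_eq (dual ract) UNIV (\<lambda>\<phi> b. \<lambda>x. \<phi> (lact b x)) lact"

text \<open>A map gamma : C \<otimes>_A C = M^* \<otimes>_B M \<otimes>_A M^* \<otimes>_B M \<rightarrow> A is given by its values
  g phi m phi' m' = gamma(phi \<otimes> m \<otimes> phi' \<otimes> m'); the first conditions say exactly that g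
  induces a well-defined (A,A)-bimodule map on the tensor product; the last one is the
  pre-cointegral identity, for arbitrary elements c = sum_k phi_k \<otimes> m_k and
  c' = sum_l phi'_l \<otimes> m'_l of C, with the coproduct given by the dual basis.\<close>
definition comatrix_precointegral ::
  "('b::ring_1 \<Rightarrow> 'm::ab_group_add \<Rightarrow> 'm) \<Rightarrow> ('m \<Rightarrow> 'a::ring_1 \<Rightarrow> 'm) \<Rightarrow> nat \<Rightarrow> (nat \<Rightarrow> 'm)
     \<Rightarrow> (nat \<Rightarrow> 'm \<Rightarrow> 'a) \<Rightarrow> (('m \<Rightarrow> 'a) \<Rightarrow> 'm \<Rightarrow> ('m \<Rightarrow> 'a) \<Rightarrow> 'm \<Rightarrow> 'a) \<Rightarrow> bool" where
  "comatrix_precointegral lact ract n e es g \<longleftrightarrow>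
     (\<forall>\<phi>\<in>dual ract. \<forall>\<psi>\<in>dual ract. \<forall>\<phi>'\<in>dual ract. \<forall>m m'.
        g (\<phi> + \<psi>) m \<phi>' m' = g \<phi> m \<phi>' m' + g \<psi> m \<phi>' m') \<and>
     (\<forall>\<phi>\<in>dual ract. \<forall>\<phi>'\<in>dual ract. \<forall>m x m'.
        g \<phi> (m + x) \<phi>' m' = g \<phi> m \<phi>' m' + g \<phi> x \<phi>' m') \<and>
     (\<forall>\<phi>\<in>dual ract. \<forall>\<phi>'\<in>dual ract. \<forall>\<psi>\<in>dual ract. \<forall>m m'.
        g \<phi> m (\<phi>' + \<psi>) m' = g \<phi> m \<phi>' m' + g \<phi> m \<psi> m') \<and>
     (\<forall>\<phi>\<in>dual ract. \<forall>\<phi>'\<in>dual ract. \<forall>m m' x.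
        g \<phi> m \<phi>' (m' + x) = g \<phi> m \<phi>' m' + g \<phi> m \<phi>' x) \<and>
     (\<forall>\<phi>\<in>dual ract. \<forall>\<phi>'\<in>dual ract. \<forall>m m' b.
        g (\<lambda>x. \<phi> (lact b x)) m \<phi>' m' = g \<phi> (lact b m) \<phi>' m') \<and>
     (\<forall>\<phi>\<in>dual ract. \<forall>\<phi>'\<in>dual ract. \<forall>m m' a.
        g \<phi> (ract m a) \<phi>' m' = g \<phi> m (\<lambda>x. a * \<phi>' x) m') \<and>
     (\<forall>\<phi>\<in>dual ract. \<forall>\<phi>'\<in>dual ract. \<forall>m m' b.
        g \<phi> m (\<lambda>x. \<phi>' (lact b x)) m' = g \<phi> m \<phi>' (lact b m')) \<and>
     (\<forall>\<phi>\<in>dual ract. \<forall>\<phi>'\<in>dual ract. \<forall>m m' a.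
        g (\<lambda>x. a * \<phi> x) m \<phi>' m' = a * g \<phi> m \<phi>' m') \<and>
     (\<forall>\<phi>\<in>dual ract. \<forall>\<phi>'\<in>dual ract. \<forall>m m' a.
        g \<phi> m \<phi>' (ract m' a) = g \<phi> m \<phi>' m' * a) \<and>
     (\<forall>cs cs'. set cs \<subseteq> dual ract \<times> UNIV \<longrightarrow> set cs' \<subseteq> dual ract \<times> UNIV \<longrightarrow>
        tensorC lact ract
          [(\<phi>, ract (e i) (g (es i) m \<phi>' m')). (\<phi>, m) \<leftarrow> cs, (\<phi>', m') \<leftarrow> cs', i \<leftarrow> [0..<n]]
          [(\<lambda>x. g \<phi> m \<phi>' (e i) * es i x, m'). (\<phi>, m) \<leftarrow> cs, (\<phi>', m') \<leftarrow> cs', i \<leftarrow> [0..<n]])"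

text \<open>Equality in S \<otimes>_B S; B acts on S through b \<mapsto> (m \<mapsto> b m).\<close>
definition tensorD :: "('b::ring_1 \<Rightarrow> 'm::ab_group_add \<Rightarrow> 'm) \<Rightarrow> ('m \<Rightarrow> 'a::ring_1 \<Rightarrow> 'm)
    \<Rightarrow> (('m \<Rightarrow> 'm) \<times> ('m \<Rightarrow> 'm)) list \<Rightarrow> (('m \<Rightarrow> 'm) \<times> ('m \<Rightarrow> 'm)) list \<Rightarrow> bool" where
  "tensorD lact ract = tensor_eq (endo ract) (endo ract) (\<lambda>s b. s \<circ> lact b) (\<lambda>b s. lact b \<circ> s)"

text \<open>A map (S \<otimes>_B S) \<otimes>_S (S \<otimes>_B S) = S \<otimes>_B S \<otimes>_B S \<rightarrow> S is given by its values
  gt s s' s'' on simple tensors s \<otimes> s' \<otimes> s'' (where (s \<otimes> t) \<otimes>_S (u \<otimes> v) corresponds to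
  s \<otimes> t u \<otimes> v). The conditions: values in S, well-defined (additive and B-balanced),
  (S,S)-bimodule map, and the pre-cointegral identity for the Sweedler coproduct
  s \<otimes> s' \<mapsto> (s \<otimes> 1) \<otimes>_S (1 \<otimes> s'), for arbitrary d = sum_k s_k \<otimes> t_k, d' = sum_l u_l \<otimes> v_l:
  sum d_(1) gt(d_(2) \<otimes> d') = sum_{k,l} s_k \<otimes> gt(1, t_k u_l, v_l) and
  sum gt(d \<otimes> d'_(1)) d'_(2) = sum_{k,l} gt(s_k, t_k u_l, 1) \<otimes> v_l.\<close>
definition sweedler_precointegral ::
  "('b::ring_1 \<Rightarrow> 'm::ab_group_add \<Rightarrow> 'm) \<Rightarrow> ('m \<Rightarrow> 'a::ring_1 \<Rightarrow> 'm)
     \<Rightarrow> (('m \<Rightarrow> 'm) \<Rightarrow> ('m \<Rightarrow> 'm) \<Rightarrow> ('m \<Rightarrow> 'm) \<Rightarrow> ('m \<Rightarrow> 'm)) \<Rightarrow> bool" where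
  "sweedler_precointegral lact ract gt \<longleftrightarrow>
     (\<forall>s\<in>endo ract. \<forall>s'\<in>endo ract. \<forall>s''\<in>endo ract. gt s s' s'' \<in> endo ract) \<and>
     (\<forall>s\<in>endo ract. \<forall>t\<in>endo ract. \<forall>s'\<in>endo ract. \<forall>s''\<in>endo ract.
        gt (s + t) s' s'' = gt s s' s'' + gt t s' s'') \<and>
     (\<forall>s\<in>endo ract. \<forall>s'\<in>endo ract. \<forall>t\<in>endo ract. \<forall>s''\<in>endo ract.
        gt s (s' + t) s'' = gt s s' s'' + gt s t s'') \<and>
     (\<forall>s\<in>endo ract. \<forall>s'\<in>endo ract. \<forall>s''\<in>endo ract. \<forall>t\<in>endo ract.
        gt s s' (s'' + t) = gt s s' s'' + gt s s' t) \<and>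
     (\<forall>s\<in>endo ract. \<forall>s'\<in>endo ract. \<forall>s''\<in>endo ract. \<forall>b.
        gt (s \<circ> lact b) s' s'' = gt s (lact b \<circ> s') s'') \<and>
     (\<forall>s\<in>endo ract. \<forall>s'\<in>endo ract. \<forall>s''\<in>endo ract. \<forall>b.
        gt s (s' \<circ> lact b) s'' = gt s s' (lact b \<circ> s'')) \<and>
     (\<forall>u\<in>endo ract. \<forall>s\<in>endo ract. \<forall>s'\<in>endo ract. \<forall>s''\<in>endo ract.
        gt (u \<circ> s) s' s'' = u \<circ> gt s s' s'') \<and>
     (\<forall>u\<in>endo ract. \<forall>s\<in>endo ract. \<forall>s'\<in>endo ract. \<forall>s''\<in>endo ract.
        gt s s' (s'' \<circ> u) = gt s s' s'' \<circ> u) \<and>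
     (\<forall>ds ds'. set ds \<subseteq> endo ract \<times> endo ract \<longrightarrow> set ds' \<subseteq> endo ract \<times> endo ract \<longrightarrow>
        tensorD lact ract
          [(s, gt id (t \<circ> u) v). (s, t) \<leftarrow> ds, (u, v) \<leftarrow> ds']
          [(gt s (t \<circ> u) id, v). (s, t) \<leftarrow> ds, (u, v) \<leftarrow> ds'])"

text \<open>Under S \<cong> M \<otimes>_A M^* (inverse: s \<mapsto> sum_i s(e_i) \<otimes> e_i^*), the map
  M \<otimes> gamma \<otimes> M^* followed by M \<otimes>_A A \<otimes>_A M^* \<cong> M \<otimes>_A M^* \<cong> S is:\<close>
definition gtilde ::
  "('m::ab_group_add \<Rightarrow> 'a::ring_1 \<Rightarrow> 'm) \<Rightarrow> nat \<Rightarrow> (nat \<Rightarrow> 'm) \<Rightarrow> (nat \<Rightarrow> 'm \<Rightarrow> 'a)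
     \<Rightarrow> (('m \<Rightarrow> 'a) \<Rightarrow> 'm \<Rightarrow> ('m \<Rightarrow> 'a) \<Rightarrow> 'm \<Rightarrow> 'a)
     \<Rightarrow> ('m \<Rightarrow> 'm) \<Rightarrow> ('m \<Rightarrow> 'm) \<Rightarrow> ('m \<Rightarrow> 'm) \<Rightarrow> ('m \<Rightarrow> 'm)" where
  "gtilde ract n e es g s s' s'' =
     (\<lambda>x. \<Sum>i<n. \<Sum>j<n. \<Sum>k<n.
        ract (s (e i)) (g (es i) (s' (e j)) (es j) (s'' (e k)) * es k x))"

end

theory Submission
  imports Defs "HOL-Library.Multiset"
begin


lemma sum_fun_apply: "(sum f A) x = sum (\<lambda>a. f a x) A"
  by (induction A rule: infinite_finite_induct) auto

lemma add_diff_add_ab: "((a::'a::ab_group_add) - b) + (c - d) = (a + c) - (b + d)" by (simp add: algebra_simps)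

lemma eq_diff_trans: "a = b \<Longrightarrow> (a \<in> S) = (b \<in> S)" by simp

lemma mem_eq_trans: "a \<in> S \<Longrightarrow> a = b \<Longrightarrow> b \<in> S" by simp

lemma eq4: "(A::'a::ab_group_add) - B - C + (C - D) = A - (B + D)" by (simp add: algebra_simps)

lemma L1: "(a::'a::ab_group_add) - b = c - d \<Longrightarrow> a + d = c + b" by (simp add: algebra_simps)
lemma L2: "(a::'a::ab_group_add) + d = c + b \<Longrightarrow> a - b = c - d" by (simp add: algebra_simps)

lemma rels_diff: "u \<in> tensor_rels X Y rx ly \<Longrightarrow> v \<in> tensor_rels X Y rx ly \<Longrightarrow> u - v \<in> tensor_rels X Y rx ly"
  using tensor_rels.add[OF _ tensor_rels.neg] by (metis diff_conv_add_uminus)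

lemma rels_sum: "(\<And>i. i \<in> I \<Longrightarrow> f i \<in> tensor_rels X Y rx ly) \<Longrightarrow> sum f I \<in> tensor_rels X Y rx ly"
  by (induction I rule: infinite_finite_induct) (auto intro: tensor_rels.intros)

lemma rels_sum_list: "(\<And>x. x \<in> set xs \<Longrightarrow> f x \<in> tensor_rels X Y rx ly) \<Longrightarrow> sum_list (map f xs) \<in> tensor_rels X Y rx ly"
  by (induction xs) (auto intro: tensor_rels.intros)

lemma formal_Nil[simp]: "formal [] = 0" by (simp add: formal_def)
lemma formal_Cons[simp]: "formal (x # xs) = fsingle x + formal xs" by (simp add: formal_def)
lemma formal_append[simp]: "formal (xs @ ys) = formal xs + formal ys" by (simp add: formal_def)

lemma formal_count: "formal xs = (\<lambda>q. int (count (mset xs) q))"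
  by (induction xs) (auto simp: fsingle_def fun_eq_iff)

lemma formal_map:
  assumes "formal xs = formal ys" shows "formal (map f xs) = formal (map f ys)"
proof -
  have "mset xs = mset ys"
    using assms by (intro multiset_eqI) (simp add: formal_count fun_eq_iff)
  then have "mset (map f xs) = mset (map f ys)" by simp
  then show ?thesis by (simp add: formal_count)
qed

lemma rels_push:
  assumes u: "u \<in> tensor_rels X Y rx ly"
  and LX: "\<And>x. x \<in> X \<Longrightarrow> L x \<in> X'" and RY: "\<And>y. y \<in> Y \<Longrightarrow> R y \<in> Y'"
  and Ladd: "\<And>x x'. x\<in>X \<Longrightarrow> x'\<in>X \<Longrightarrow> L (x + x') = L x + L x'"
  and Radd: "\<And>y y'. y\<in>Y \<Longrightarrow> y'\<in>Y \<Longrightarrow> R (y + y') = R y + R y'"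
  and Lbal: "\<And>x r. x\<in>X \<Longrightarrow> L (rx x r) = rx' (L x) r"
  and Rbal: "\<And>y r. y\<in>Y \<Longrightarrow> R (ly r y) = ly' r (R y)"
  shows "\<exists>xs ys. u = formal xs - formal ys \<and>
    formal (map (\<lambda>(x,y). (L x, R y)) xs) - formal (map (\<lambda>(x,y). (L x, R y)) ys) \<in> tensor_rels X' Y' rx' ly'"
  using u
proof induction
  case zero
  show ?case apply (rule exI[of _ "[]"], rule exI[of _ "[]"])
    using tensor_rels.zero[of X' Y' rx' ly'] by (simp only: list.map formal_Nil diff_self)
next
  case (add u v)
  then obtain xs ys xs' ys' where h: "u = formal xs - formal ys"
    "formal (map (\<lambda>(x,y). (L x, R y)) xs) - formal (map (\<lambda>(x,y). (L x, R y)) ys) \<in> tensor_rels X' Y' rx' ly'"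
    "v = formal xs' - formal ys'"
    "formal (map (\<lambda>(x,y). (L x, R y)) xs') - formal (map (\<lambda>(x,y). (L x, R y)) ys') \<in> tensor_rels X' Y' rx' ly'"
    by blast
  show ?case
    apply (rule exI[of _ "xs @ xs'"], rule exI[of _ "ys @ ys'"])
    using h tensor_rels.add[OF h(2) h(4)] by (simp only: map_append formal_append add_diff_add_ab simp_thms)
next
  case (neg u)
  then obtain xs ys where h: "u = formal xs - formal ys"
    "formal (map (\<lambda>(x,y). (L x, R y)) xs) - formal (map (\<lambda>(x,y). (L x, R y)) ys) \<in> tensor_rels X' Y' rx' ly'"
    by blast
  show ?case
    apply (rule exI[of _ ys], rule exI[of _ xs])
    using h tensor_rels.neg[OF h(2)] by (simp only: minus_diff_eq simp_thms)
next
  case (addl x x' y)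
  have m: "fsingle (L x + L x', R y) - fsingle (L x, R y) - fsingle (L x', R y) \<in> tensor_rels X' Y' rx' ly'"
    using addl by (intro tensor_rels.addl LX RY)
  have e1: "fsingle (x + x', y) - fsingle (x, y) - fsingle (x', y) = formal [(x + x', y)] - formal [(x, y), (x', y)]"
    by (simp add: fun_eq_iff)
  have e2: "formal (map (\<lambda>(x,y). (L x, R y)) [(x + x', y)]) - formal (map (\<lambda>(x,y). (L x, R y)) [(x, y), (x', y)]) = fsingle (L x + L x', R y) - fsingle (L x, R y) - fsingle (L x', R y)"
    by (simp add: Ladd addl fun_eq_iff)
  show ?case by (rule exI, rule exI, rule conjI[OF e1]) (subst e2, rule m)
next
  case (addr x y y')
  have m: "fsingle (L x, R y + R y') - fsingle (L x, R y) - fsingle (L x, R y') \<in> tensor_rels X' Y' rx' ly'"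
    using addr by (intro tensor_rels.addr LX RY)
  have e1: "fsingle (x, y + y') - fsingle (x, y) - fsingle (x, y') = formal [(x, y + y')] - formal [(x, y), (x, y')]"
    by (simp add: fun_eq_iff)
  have e2: "formal (map (\<lambda>(x,y). (L x, R y)) [(x, y + y')]) - formal (map (\<lambda>(x,y). (L x, R y)) [(x, y), (x, y')]) = fsingle (L x, R y + R y') - fsingle (L x, R y) - fsingle (L x, R y')"
    by (simp add: Radd addr fun_eq_iff)
  show ?case by (rule exI, rule exI, rule conjI[OF e1]) (subst e2, rule m)
next
  case (bal x y r)
  have m: "fsingle (rx' (L x) r, R y) - fsingle (L x, ly' r (R y)) \<in> tensor_rels X' Y' rx' ly'"
    using bal by (intro tensor_rels.bal LX RY)
  have e1: "fsingle (rx x r, y) - fsingle (x, ly r y) = formal [(rx x r, y)] - formal [(x, ly r y)]"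
    by (simp add: fun_eq_iff)
  have e2: "formal (map (\<lambda>(x,y). (L x, R y)) [(rx x r, y)]) - formal (map (\<lambda>(x,y). (L x, R y)) [(x, ly r y)]) = fsingle (rx' (L x) r, R y) - fsingle (L x, ly' r (R y))"
    by (simp add: Lbal Rbal bal fun_eq_iff)
  show ?case by (rule exI, rule exI, rule conjI[OF e1]) (subst e2, rule m)
qed

lemma tensor_eq_push:
  assumes u: "tensor_eq X Y rx ly xs ys"
  and LX: "\<And>x. x \<in> X \<Longrightarrow> L x \<in> X'" and RY: "\<And>y. y \<in> Y \<Longrightarrow> R y \<in> Y'"
  and Ladd: "\<And>x x'. x\<in>X \<Longrightarrow> x'\<in>X \<Longrightarrow> L (x + x') = L x + L x'"
  and Radd: "\<And>y y'. y\<in>Y \<Longrightarrow> y'\<in>Y \<Longrightarrow> R (y + y') = R y + R y'"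
  and Lbal: "\<And>x r. x\<in>X \<Longrightarrow> L (rx x r) = rx' (L x) r"
  and Rbal: "\<And>y r. y\<in>Y \<Longrightarrow> R (ly r y) = ly' r (R y)"
  shows "formal (map (\<lambda>(x,y). (L x, R y)) xs) - formal (map (\<lambda>(x,y). (L x, R y)) ys) \<in> tensor_rels X' Y' rx' ly'"
proof -
  let ?F = "\<lambda>(x,y). (L x, R y)"
  obtain as bs where h: "formal xs - formal ys = formal as - formal bs"
    "formal (map ?F as) - formal (map ?F bs) \<in> tensor_rels X' Y' rx' ly'"
    using rels_push[where L=L and R=R and X'=X' and Y'=Y' and rx'=rx' and ly'=ly', OF u[unfolded tensor_eq_def] LX RY Ladd Radd Lbal Rbal] by blast
  have "formal (xs @ bs) = formal (as @ ys)" using L1[OF h(1)] by (simp only: formal_append)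
  then have "formal (map ?F (xs @ bs)) = formal (map ?F (as @ ys))" by (rule formal_map)
  then have "formal (map ?F xs) + formal (map ?F bs) = formal (map ?F as) + formal (map ?F ys)"
    by (simp only: map_append formal_append)
  then have "formal (map ?F xs) - formal (map ?F ys) = formal (map ?F as) - formal (map ?F bs)"
    by (rule L2)
  with h(2) show ?thesis by (simp only:)
qed

lemma sum_closed: "finite I \<Longrightarrow> 0 \<in> X \<Longrightarrow> (\<And>a b. a\<in>X \<Longrightarrow> b\<in>X \<Longrightarrow> a+b \<in> X) \<Longrightarrow> (\<And>i. i\<in>I \<Longrightarrow> x i \<in> X) \<Longrightarrow> sum x I \<in> X"
  by (induction I rule: finite_induct) auto

lemma split_left:
  assumes "finite I" "0 \<in> X" "\<And>a b. a\<in>X \<Longrightarrow> b\<in>X \<Longrightarrow> a+b \<in> X" "\<And>i. i\<in>I \<Longrightarrow> x i \<in> X" "y \<in> Y"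
  shows "fsingle (sum x I, y) - (\<Sum>i\<in>I. fsingle (x i, y)) \<in> tensor_rels X Y rx ly"
  using assms
proof (induction I rule: finite_induct)
  case empty
  have "fsingle (0+0, y) - fsingle (0, y) - fsingle (0, y) \<in> tensor_rels X Y rx ly"
    using empty by (intro tensor_rels.addl) auto
  from tensor_rels.neg[OF this] show ?case by simp
next
  case (insert a F)
  have S: "sum x F \<in> X" using insert by (intro sum_closed) auto
  have h1: "fsingle (x a + sum x F, y) - fsingle (x a, y) - fsingle (sum x F, y) \<in> tensor_rels X Y rx ly"
    using insert S by (intro tensor_rels.addl) auto
  have h2: "fsingle (sum x F, y) - (\<Sum>i\<in>F. fsingle (x i, y)) \<in> tensor_rels X Y rx ly" by (rule insert.IH) (use insert in auto)
  note m = tensor_rels.add[OF h1 h2]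
  show ?case
    by (rule mem_eq_trans[OF m]) (simp only: sum.insert[OF insert(1,2)] eq4)
qed

lemma split_right:
  assumes "finite I" "0 \<in> Y" "\<And>a b. a\<in>Y \<Longrightarrow> b\<in>Y \<Longrightarrow> a+b \<in> Y" "\<And>i. i\<in>I \<Longrightarrow> y i \<in> Y" "x \<in> X"
  shows "fsingle (x, sum y I) - (\<Sum>i\<in>I. fsingle (x, y i)) \<in> tensor_rels X Y rx ly"
  using assms
proof (induction I rule: finite_induct)
  case empty
  have "fsingle (x, 0+0) - fsingle (x, 0) - fsingle (x, 0) \<in> tensor_rels X Y rx ly"
    using empty by (intro tensor_rels.addr) auto
  from tensor_rels.neg[OF this] show ?case by simp
next
  case (insert a F)
  have S: "sum y F \<in> Y" using insert by (intro sum_closed) auto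
  have h1: "fsingle (x, y a + sum y F) - fsingle (x, y a) - fsingle (x, sum y F) \<in> tensor_rels X Y rx ly"
    using insert S by (intro tensor_rels.addr) auto
  have h2: "fsingle (x, sum y F) - (\<Sum>i\<in>F. fsingle (x, y i)) \<in> tensor_rels X Y rx ly" by (rule insert.IH) (use insert in auto)
  note m = tensor_rels.add[OF h1 h2]
  show ?case
    by (rule mem_eq_trans[OF m]) (simp only: sum.insert[OF insert(1,2)] eq4)
qed




declare sum.cong[cong]

locale pc =
  fixes lact :: "'b::ring_1 \<Rightarrow> 'm::ab_group_add \<Rightarrow> 'm"
    and ract :: "'m \<Rightarrow> 'a::ring_1 \<Rightarrow> 'm"
    and n :: nat and e :: "nat \<Rightarrow> 'm" and es :: "nat \<Rightarrow> 'm \<Rightarrow> 'a"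
    and g :: "('m \<Rightarrow> 'a) \<Rightarrow> 'm \<Rightarrow> ('m \<Rightarrow> 'a) \<Rightarrow> 'm \<Rightarrow> 'a"
  assumes bim: "bimodule lact ract"
    and db: "dual_basis ract n e es"
    and cp: "comatrix_precointegral lact ract n e es g"
begin

lemma ract_addl: "ract (m + m') a = ract m a + ract m' a" using bim unfolding bimodule_def by blast
lemma ract_addr: "ract m (a + a') = ract m a + ract m a'" using bim unfolding bimodule_def by blast
lemma ract_mult: "ract m (a * a') = ract (ract m a) a'" using bim unfolding bimodule_def by blast
lemma ract_one: "ract m 1 = m" using bim unfolding bimodule_def by blast
lemma lact_add: "lact b (m + m') = lact b m + lact b m'" using bim unfolding bimodule_def by simp
lemma lact_ract: "lact b (ract m a) = ract (lact b m) a" using bim unfolding bimodule_def by blast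

lemma ract_zero_l[simp]: "ract 0 a = 0" using ract_addl[of 0 0 a] by simp
lemma ract_zero_r[simp]: "ract m 0 = 0" using ract_addr[of m 0 0] by simp
lemma lact_zero[simp]: "lact b 0 = 0" using lact_add[of b 0 0] by simp
lemma ract_sum_l: "ract (\<Sum>i\<in>I. f i) a = (\<Sum>i\<in>I. ract (f i) a)"
  by (induction I rule: infinite_finite_induct) (simp_all add: ract_addl)
lemma ract_sum_r: "ract m (\<Sum>i\<in>I. f i) = (\<Sum>i\<in>I. ract m (f i))"
  by (induction I rule: infinite_finite_induct) (simp_all add: ract_addr)
lemma lact_sum: "lact b (\<Sum>i\<in>I. f i) = (\<Sum>i\<in>I. lact b (f i))"
  by (induction I rule: infinite_finite_induct) (simp_all add: lact_add)

lemma dual_add: "\<phi> \<in> dual ract \<Longrightarrow> \<phi> (m + m') = \<phi> m + \<phi> m'" unfolding dual_def by blast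
lemma dual_ract: "\<phi> \<in> dual ract \<Longrightarrow> \<phi> (ract m a) = \<phi> m * a" unfolding dual_def by blast
lemma dual_zero: "\<phi> \<in> dual ract \<Longrightarrow> \<phi> 0 = 0" using dual_add[of \<phi> 0 0] by simp
lemma dual_sum: "\<phi> \<in> dual ract \<Longrightarrow> \<phi> (\<Sum>i\<in>I. f i) = (\<Sum>i\<in>I. \<phi> (f i))"
  by (induction I rule: infinite_finite_induct) (simp_all add: dual_add dual_zero)

lemma endo_add: "s \<in> endo ract \<Longrightarrow> s (m + m') = s m + s m'" unfolding endo_def by blast
lemma endo_ract: "s \<in> endo ract \<Longrightarrow> s (ract m a) = ract (s m) a" unfolding endo_def by blast
lemma endo_zero: "s \<in> endo ract \<Longrightarrow> s 0 = 0" using endo_add[of s 0 0] by simp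
lemma endo_sum: "s \<in> endo ract \<Longrightarrow> s (\<Sum>i\<in>I. f i) = (\<Sum>i\<in>I. s (f i))"
  by (induction I rule: infinite_finite_induct) (simp_all add: endo_add endo_zero)

lemma dual_0: "0 \<in> dual ract" unfolding dual_def by simp
lemma dual_plus: "\<phi> \<in> dual ract \<Longrightarrow> \<psi> \<in> dual ract \<Longrightarrow> \<phi> + \<psi> \<in> dual ract"
  unfolding dual_def by (simp add: distrib_right)
lemma dual_smul: "\<phi> \<in> dual ract \<Longrightarrow> (\<lambda>x. c * \<phi> x) \<in> dual ract"
  unfolding dual_def by (simp add: distrib_left mult.assoc)
lemma dual_lact: "\<phi> \<in> dual ract \<Longrightarrow> (\<lambda>x. \<phi> (lact b x)) \<in> dual ract"
  unfolding dual_def by (simp add: lact_add lact_ract)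
lemma dual_sumc: "(\<And>i. i \<in> I \<Longrightarrow> f i \<in> dual ract) \<Longrightarrow> sum f I \<in> dual ract"
  by (induction I rule: infinite_finite_induct) (simp_all add: dual_0 dual_plus)

lemma endo_0: "0 \<in> endo ract" unfolding endo_def by simp
lemma endo_plus: "s \<in> endo ract \<Longrightarrow> t \<in> endo ract \<Longrightarrow> s + t \<in> endo ract"
  unfolding endo_def by (simp add: ract_addl)
lemma endo_comp: "s \<in> endo ract \<Longrightarrow> t \<in> endo ract \<Longrightarrow> s \<circ> t \<in> endo ract"
  unfolding endo_def by simp
lemma endo_id: "id \<in> endo ract" unfolding endo_def by simp
lemma endo_lact: "lact b \<in> endo ract" unfolding endo_def by (simp add: lact_add lact_ract)
lemma endo_tens: "\<phi> \<in> dual ract \<Longrightarrow> (\<lambda>x. ract p (\<phi> x)) \<in> endo ract"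
  unfolding endo_def by (simp add: dual_add dual_ract ract_addr ract_mult)
lemma endo_sumc: "(\<And>i. i \<in> I \<Longrightarrow> f i \<in> endo ract) \<Longrightarrow> sum f I \<in> endo ract"
  by (induction I rule: infinite_finite_induct) (simp_all add: endo_0 endo_plus)

lemma es_dual: "k < n \<Longrightarrow> es k \<in> dual ract" using db unfolding dual_basis_def by blast
lemma db_exp: "m = (\<Sum>i<n. ract (e i) (es i m))" using db unfolding dual_basis_def by blast

lemma es_add[simp]: "k < n \<Longrightarrow> es k (m + m') = es k m + es k m'" by (rule dual_add[OF es_dual])
lemma es_ract[simp]: "k < n \<Longrightarrow> es k (ract m a) = es k m * a" by (rule dual_ract[OF es_dual])

lemma dual_exp: "q \<in> dual ract \<Longrightarrow> (\<Sum>k<n. q (e k) * es k y) = q y"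
proof -
  assume q: "q \<in> dual ract"
  have "q y = q (\<Sum>k<n. ract (e k) (es k y))" by (rule arg_cong[OF db_exp])
  also have "\<dots> = (\<Sum>k<n. q (e k) * es k y)" by (simp add: dual_sum[OF q] dual_ract[OF q])
  finally show ?thesis by simp
qed

lemma endo_exp: "s \<in> endo ract \<Longrightarrow> s y = (\<Sum>k<n. ract (s (e k)) (es k y))"
proof -
  assume s: "s \<in> endo ract"
  have "s y = s (\<Sum>k<n. ract (e k) (es k y))" by (rule arg_cong[OF db_exp])
  also have "\<dots> = (\<Sum>k<n. ract (s (e k)) (es k y))" by (simp add: endo_sum[OF s] endo_ract[OF s])
  finally show ?thesis .
qed

end



context pc begin

lemma g_add1: "\<phi>\<in>dual ract \<Longrightarrow> \<psi>\<in>dual ract \<Longrightarrow> \<phi>'\<in>dual ract \<Longrightarrow> g (\<phi> + \<psi>) m \<phi>' m' = g \<phi> m \<phi>' m' + g \<psi> m \<phi>' m'"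
  using cp unfolding comatrix_precointegral_def by simp
lemma g_add2: "\<phi>\<in>dual ract \<Longrightarrow> \<phi>'\<in>dual ract \<Longrightarrow> g \<phi> (m + x) \<phi>' m' = g \<phi> m \<phi>' m' + g \<phi> x \<phi>' m'"
  using cp unfolding comatrix_precointegral_def by simp
lemma g_add3: "\<phi>\<in>dual ract \<Longrightarrow> \<phi>'\<in>dual ract \<Longrightarrow> \<psi>\<in>dual ract \<Longrightarrow> g \<phi> m (\<phi>' + \<psi>) m' = g \<phi> m \<phi>' m' + g \<phi> m \<psi> m'"
  using cp unfolding comatrix_precointegral_def by simp
lemma g_add4: "\<phi>\<in>dual ract \<Longrightarrow> \<phi>'\<in>dual ract \<Longrightarrow> g \<phi> m \<phi>' (m' + x) = g \<phi> m \<phi>' m' + g \<phi> m \<phi>' x"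
  using cp unfolding comatrix_precointegral_def by simp
lemma g_lact1: "\<phi>\<in>dual ract \<Longrightarrow> \<phi>'\<in>dual ract \<Longrightarrow> g (\<lambda>x. \<phi> (lact b x)) m \<phi>' m' = g \<phi> (lact b m) \<phi>' m'"
  using cp unfolding comatrix_precointegral_def by simp
lemma g_ract2: "\<phi>\<in>dual ract \<Longrightarrow> \<phi>'\<in>dual ract \<Longrightarrow> g \<phi> (ract m a) \<phi>' m' = g \<phi> m (\<lambda>x. a * \<phi>' x) m'"
  using cp unfolding comatrix_precointegral_def by simp
lemma g_lact3: "\<phi>\<in>dual ract \<Longrightarrow> \<phi>'\<in>dual ract \<Longrightarrow> g \<phi> m (\<lambda>x. \<phi>' (lact b x)) m' = g \<phi> m \<phi>' (lact b m')"
  using cp unfolding comatrix_precointegral_def by simp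
lemma g_smul1: "\<phi>\<in>dual ract \<Longrightarrow> \<phi>'\<in>dual ract \<Longrightarrow> g (\<lambda>x. a * \<phi> x) m \<phi>' m' = a * g \<phi> m \<phi>' m'"
  using cp unfolding comatrix_precointegral_def by simp
lemma g_ract4: "\<phi>\<in>dual ract \<Longrightarrow> \<phi>'\<in>dual ract \<Longrightarrow> g \<phi> m \<phi>' (ract m' a) = g \<phi> m \<phi>' m' * a"
  using cp unfolding comatrix_precointegral_def by simp
lemma g_coint: "set cs \<subseteq> dual ract \<times> UNIV \<Longrightarrow> set cs' \<subseteq> dual ract \<times> UNIV \<Longrightarrow>
        tensorC lact ract
          [(\<phi>, ract (e i) (g (es i) m \<phi>' m')). (\<phi>, m) \<leftarrow> cs, (\<phi>', m') \<leftarrow> cs', i \<leftarrow> [0..<n]]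
          [(\<lambda>x. g \<phi> m \<phi>' (e i) * es i x, m'). (\<phi>, m) \<leftarrow> cs, (\<phi>', m') \<leftarrow> cs', i \<leftarrow> [0..<n]]"
  using cp unfolding comatrix_precointegral_def by blast

lemma g_zero2: "\<phi>\<in>dual ract \<Longrightarrow> \<phi>'\<in>dual ract \<Longrightarrow> g \<phi> 0 \<phi>' m' = 0"
  using g_add2[of \<phi> \<phi>' 0 0 m'] by simp
lemma g_zero4: "\<phi>\<in>dual ract \<Longrightarrow> \<phi>'\<in>dual ract \<Longrightarrow> g \<phi> m \<phi>' 0 = 0"
  using g_add4[of \<phi> \<phi>' m 0 0] by simp
lemma g_sum2: "\<phi>\<in>dual ract \<Longrightarrow> \<phi>'\<in>dual ract \<Longrightarrow> g \<phi> (\<Sum>i\<in>I. f i) \<phi>' m' = (\<Sum>i\<in>I. g \<phi> (f i) \<phi>' m')"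
  by (induction I rule: infinite_finite_induct) (simp_all add: g_add2 g_zero2)
lemma g_sum4: "\<phi>\<in>dual ract \<Longrightarrow> \<phi>'\<in>dual ract \<Longrightarrow> g \<phi> m \<phi>' (\<Sum>i\<in>I. f i) = (\<Sum>i\<in>I. g \<phi> m \<phi>' (f i))"
  by (induction I rule: infinite_finite_induct) (simp_all add: g_add4 g_zero4)

lemma key:
  fixes h :: "'m \<Rightarrow> ('m \<Rightarrow> 'a) \<Rightarrow> 'c::ab_group_add"
  assumes s: "s \<in> endo ract"
   and h1: "\<And>p p' \<phi>. \<phi> \<in> dual ract \<Longrightarrow> h (p + p') \<phi> = h p \<phi> + h p' \<phi>"
   and h2: "\<And>p \<phi> \<psi>. \<phi> \<in> dual ract \<Longrightarrow> \<psi> \<in> dual ract \<Longrightarrow> h p (\<phi> + \<psi>) = h p \<phi> + h p \<psi>"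
   and h3: "\<And>p a \<phi>. \<phi> \<in> dual ract \<Longrightarrow> h (ract p a) \<phi> = h p (\<lambda>x. a * \<phi> x)"
  shows "(\<Sum>j<n. h (s (lact b (e j))) (es j)) = (\<Sum>j<n. h (s (e j)) (\<lambda>x. es j (lact b x)))"
proof -
  have h10: "h 0 \<phi> = 0" if "\<phi> \<in> dual ract" for \<phi> using h1[OF that, of 0 0] by simp
  have h20: "h p 0 = 0" for p using h2[OF dual_0 dual_0, of p] by simp
  have hs1: "h (\<Sum>i\<in>I. f i) \<phi> = (\<Sum>i\<in>I. h (f i) \<phi>)" if "\<phi> \<in> dual ract" for \<phi> I f
    by (induction I rule: infinite_finite_induct) (simp_all add: h1[OF that] h10[OF that])
  have hs2: "h p (\<Sum>i\<in>I. f i) = (\<Sum>i\<in>I. h p (f i))" if "\<And>i. i \<in> I \<Longrightarrow> f i \<in> dual ract" for p I f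
    using that
  proof (induction I rule: infinite_finite_induct)
    case (insert x F)
    have "h p (sum f (insert x F)) = h p (f x + sum f F)" by (simp only: sum.insert[OF insert(1,2)])
    also have "\<dots> = h p (f x) + h p (sum f F)" using insert(4) by (intro h2 dual_sumc) auto
    also have "\<dots> = h p (f x) + (\<Sum>i\<in>F. h p (f i))" using insert by simp
    finally show ?case by (simp only: sum.insert[OF insert(1,2)])
  qed (simp_all add: h20)
  have exp: "(\<lambda>x. es j (lact b x)) = (\<Sum>l<n. (\<lambda>x. es j (lact b (e l)) * es l x))" if "j < n" for j
    by (rule ext) (simp add: sum_fun_apply dual_exp[OF dual_lact[OF es_dual[OF that]]])
  have "(\<Sum>j<n. h (s (e j)) (\<lambda>x. es j (lact b x)))
      = (\<Sum>j<n. \<Sum>l<n. h (s (e j)) (\<lambda>x. es j (lact b (e l)) * es l x))"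
  proof (rule sum.cong[OF refl])
    fix j assume "j \<in> {..<n}"
    then have j: "j < n" by simp
    show "h (s (e j)) (\<lambda>x. es j (lact b x)) = (\<Sum>l<n. h (s (e j)) (\<lambda>x. es j (lact b (e l)) * es l x))"
      unfolding exp[OF j] by (rule hs2) (auto intro!: dual_smul es_dual)
  qed
  also have "\<dots> = (\<Sum>j<n. \<Sum>l<n. h (ract (s (e j)) (es j (lact b (e l)))) (es l))"
    by (intro sum.cong refl, rule h3[symmetric]) (simp add: es_dual)
  also have "\<dots> = (\<Sum>l<n. \<Sum>j<n. h (ract (s (e j)) (es j (lact b (e l)))) (es l))"
    by (rule sum.swap)
  also have "\<dots> = (\<Sum>l<n. h (\<Sum>j<n. ract (s (e j)) (es j (lact b (e l)))) (es l))"
    by (intro sum.cong refl, rule hs1[symmetric]) (simp add: es_dual)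
  also have "\<dots> = (\<Sum>l<n. h (s (lact b (e l))) (es l))"
    by (simp add: endo_exp[OF s, symmetric])
  finally show ?thesis by simp
qed

end



lemma sum2_cong: "(\<And>i j. i < n \<Longrightarrow> j < n \<Longrightarrow> f i j = f' i j) \<Longrightarrow>
  (\<Sum>i<n. \<Sum>j<n. f i j) = (\<Sum>i<n. \<Sum>j<n. f' i j)"
  by (intro sum.cong refl) auto

lemma sum3_cong: "(\<And>i j k. i < n \<Longrightarrow> j < n \<Longrightarrow> k < n \<Longrightarrow> f i j k = f' i j k) \<Longrightarrow>
  (\<Sum>i<n. \<Sum>j<n. \<Sum>k<n. f i j k) = (\<Sum>i<n. \<Sum>j<n. \<Sum>k<n. f' i j k)"
  by (intro sum.cong refl) auto

context pc begin

abbreviation gt where "gt \<equiv> gtilde ract n e es g"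

lemma gt_endo: "gt s s' s'' \<in> endo ract"
  unfolding endo_def
proof (intro CollectI conjI allI)
  fix m m'
  have "gt s s' s'' (m + m') = (\<Sum>i<n. \<Sum>j<n. \<Sum>k<n.
        ract (s (e i)) (g (es i) (s' (e j)) (es j) (s'' (e k)) * es k m) +
        ract (s (e i)) (g (es i) (s' (e j)) (es j) (s'' (e k)) * es k m'))"
    unfolding gtilde_def by (rule sum3_cong) (simp add: distrib_left ract_addr)
  then show "gt s s' s'' (m + m') = gt s s' s'' m + gt s s' s'' m'"
    by (simp add: gtilde_def sum.distrib)
next
  fix m a
  have "gt s s' s'' (ract m a) = (\<Sum>i<n. \<Sum>j<n. \<Sum>k<n.
        ract (ract (s (e i)) (g (es i) (s' (e j)) (es j) (s'' (e k)) * es k m)) a)"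
    unfolding gtilde_def by (rule sum3_cong) (simp add: ract_mult[symmetric] mult.assoc)
  then show "gt s s' s'' (ract m a) = ract (gt s s' s'' m) a"
    by (simp add: gtilde_def ract_sum_l)
qed

lemma gt_add1: "gt (s + t) s' s'' = gt s s' s'' + gt t s' s''"
  by (rule ext) (simp add: gtilde_def ract_addl sum.distrib)

lemma gt_add2: "gt s (s' + t) s'' = gt s s' s'' + gt s t s''"
proof (rule ext)
  fix x
  have "gt s (s' + t) s'' x = (\<Sum>i<n. \<Sum>j<n. \<Sum>k<n.
        ract (s (e i)) (g (es i) (s' (e j)) (es j) (s'' (e k)) * es k x) +
        ract (s (e i)) (g (es i) (t (e j)) (es j) (s'' (e k)) * es k x))"
    unfolding gtilde_def by (rule sum3_cong) (simp add: g_add2 es_dual distrib_right ract_addr)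
  then show "gt s (s' + t) s'' x = (gt s s' s'' + gt s t s'') x"
    by (simp add: gtilde_def sum.distrib)
qed

lemma gt_add3: "gt s s' (s'' + t) = gt s s' s'' + gt s s' t"
proof (rule ext)
  fix x
  have "gt s s' (s'' + t) x = (\<Sum>i<n. \<Sum>j<n. \<Sum>k<n.
        ract (s (e i)) (g (es i) (s' (e j)) (es j) (s'' (e k)) * es k x) +
        ract (s (e i)) (g (es i) (s' (e j)) (es j) (t (e k)) * es k x))"
    unfolding gtilde_def by (rule sum3_cong) (simp add: g_add4 es_dual distrib_right ract_addr)
  then show "gt s s' (s'' + t) x = (gt s s' s'' + gt s s' t) x"
    by (simp add: gtilde_def sum.distrib)
qed

lemma gt_comp1: "u \<in> endo ract \<Longrightarrow> gt (u \<circ> s) s' s'' = u \<circ> gt s s' s''"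
  by (rule ext) (simp add: gtilde_def endo_sum endo_ract)


lemma gt_bal1:
  assumes s: "s \<in> endo ract" and s': "s' \<in> endo ract" and s'': "s'' \<in> endo ract"
  shows "gt (s \<circ> lact b) s' s'' = gt s (lact b \<circ> s') s''"
proof (rule ext)
  fix x
  define h where "h = (\<lambda>p \<phi>. (\<Sum>j<n. \<Sum>k<n. ract p (g \<phi> (s' (e j)) (es j) (s'' (e k)) * es k x)))"
  have "(\<Sum>i<n. h (s (lact b (e i))) (es i)) = (\<Sum>i<n. h (s (e i)) (\<lambda>x. es i (lact b x)))"
  proof (rule key[OF s])
    fix p p' \<phi> show "h (p + p') \<phi> = h p \<phi> + h p' \<phi>"
      unfolding h_def by (simp add: ract_addl sum.distrib)
  next
    fix p \<phi> \<psi> assume "\<phi> \<in> dual ract" "\<psi> \<in> dual ract"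
    then have "h p (\<phi> + \<psi>) = (\<Sum>j<n. \<Sum>k<n. ract p (g \<phi> (s' (e j)) (es j) (s'' (e k)) * es k x)
        + ract p (g \<psi> (s' (e j)) (es j) (s'' (e k)) * es k x))"
      unfolding h_def by (intro sum2_cong) (simp add: g_add1 es_dual distrib_right ract_addr)
    then show "h p (\<phi> + \<psi>) = h p \<phi> + h p \<psi>"
      unfolding h_def by (simp add: sum.distrib)
  next
    fix p a \<phi> assume "\<phi> \<in> dual ract"
    then show "h (ract p a) \<phi> = h p (\<lambda>x. a * \<phi> x)"
      unfolding h_def by (intro sum2_cong) (simp add: g_smul1 es_dual ract_mult[symmetric] mult.assoc)
  qed
  moreover have "gt (s \<circ> lact b) s' s'' x = (\<Sum>i<n. h (s (lact b (e i))) (es i))"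
    unfolding h_def gtilde_def by simp
  moreover have "gt s (lact b \<circ> s') s'' x = (\<Sum>i<n. h (s (e i)) (\<lambda>x. es i (lact b x)))"
    unfolding h_def gtilde_def by (simp, intro sum.cong refl sum2_cong) (simp add: g_lact1 es_dual)
  ultimately show "gt (s \<circ> lact b) s' s'' x = gt s (lact b \<circ> s') s'' x" by simp
qed

lemma gt_bal2:
  assumes s: "s \<in> endo ract" and s': "s' \<in> endo ract" and s'': "s'' \<in> endo ract"
  shows "gt s (s' \<circ> lact b) s'' = gt s s' (lact b \<circ> s'')"
proof (rule ext)
  fix x
  have inner: "(\<Sum>j<n. ract (s (e i)) (g (es i) (s' (lact b (e j))) (es j) (s'' (e k)) * es k x))
     = (\<Sum>j<n. ract (s (e i)) (g (es i) (s' (e j)) (es j) (lact b (s'' (e k))) * es k x))"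
    if i: "i < n" and k: "k < n" for i k
  proof -
    define h where "h = (\<lambda>p \<phi>. ract (s (e i)) (g (es i) p \<phi> (s'' (e k)) * es k x))"
    have "(\<Sum>j<n. h (s' (lact b (e j))) (es j)) = (\<Sum>j<n. h (s' (e j)) (\<lambda>x. es j (lact b x)))"
    proof (rule key[OF s'])
      fix p p' \<phi> assume "\<phi> \<in> dual ract" then show "h (p + p') \<phi> = h p \<phi> + h p' \<phi>"
        unfolding h_def by (simp add: g_add2 es_dual i distrib_right ract_addr)
    next
      fix p \<phi> \<psi> assume "\<phi> \<in> dual ract" "\<psi> \<in> dual ract"
      then show "h p (\<phi> + \<psi>) = h p \<phi> + h p \<psi>"
        unfolding h_def by (simp add: g_add3 es_dual i distrib_right ract_addr)
    next
      fix p a \<phi> assume "\<phi> \<in> dual ract"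
      then show "h (ract p a) \<phi> = h p (\<lambda>x. a * \<phi> x)"
        unfolding h_def by (simp add: g_ract2 es_dual i)
    qed
    also have "\<dots> = (\<Sum>j<n. ract (s (e i)) (g (es i) (s' (e j)) (es j) (lact b (s'' (e k))) * es k x))"
      unfolding h_def by (intro sum.cong refl) (simp add: g_lact3 es_dual i)
    finally show ?thesis unfolding h_def .
  qed
  have "gt s (s' \<circ> lact b) s'' x = (\<Sum>i<n. \<Sum>k<n. \<Sum>j<n. ract (s (e i)) (g (es i) (s' (lact b (e j))) (es j) (s'' (e k)) * es k x))"
    unfolding gtilde_def by (simp, rule sum.cong[OF refl], rule sum.swap)
  also have "\<dots> = (\<Sum>i<n. \<Sum>k<n. \<Sum>j<n. ract (s (e i)) (g (es i) (s' (e j)) (es j) (lact b (s'' (e k))) * es k x))"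
    by (rule sum2_cong) (simp add: inner)
  also have "\<dots> = gt s s' (lact b \<circ> s'') x"
    unfolding gtilde_def by (simp, rule sum.cong[OF refl], rule sum.swap)
  finally show "gt s (s' \<circ> lact b) s'' x = gt s s' (lact b \<circ> s'') x" .
qed

lemma qdual:
  assumes "\<phi> \<in> dual ract" "\<phi>' \<in> dual ract" "t \<in> endo ract"
  shows "(\<lambda>m. g \<phi> p \<phi>' (t m)) \<in> dual ract"
  unfolding dual_def using assms by (simp add: endo_add endo_ract g_add4 g_ract4)

lemma gt_comp3:
  assumes s'': "s'' \<in> endo ract" and u: "u \<in> endo ract"
  shows "gt s s' (s'' \<circ> u) = gt s s' s'' \<circ> u"
proof (rule ext)
  fix x
  have inner: "(\<Sum>k<n. g (es i) (s' (e j)) (es j) (s'' (u (e k))) * es k x)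
    = (\<Sum>k<n. g (es i) (s' (e j)) (es j) (s'' (e k)) * es k (u x))"
    if i: "i < n" and j: "j < n" for i j
  proof -
    have d1: "(\<lambda>m. g (es i) (s' (e j)) (es j) ((s'' \<circ> u) m)) \<in> dual ract"
      by (rule qdual) (simp_all only: es_dual i j endo_comp s'' u)
    have d2: "(\<lambda>m. g (es i) (s' (e j)) (es j) (s'' m)) \<in> dual ract"
      by (rule qdual) (simp_all add: es_dual i j s'')
    show ?thesis using dual_exp[OF d1, of x] dual_exp[OF d2, of "u x"] by simp
  qed
  have "gt s s' (s'' \<circ> u) x = (\<Sum>i<n. \<Sum>j<n. ract (s (e i)) (\<Sum>k<n. g (es i) (s' (e j)) (es j) (s'' (u (e k))) * es k x))"
    unfolding gtilde_def by (simp add: ract_sum_r)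
  also have "\<dots> = (\<Sum>i<n. \<Sum>j<n. ract (s (e i)) (\<Sum>k<n. g (es i) (s' (e j)) (es j) (s'' (e k)) * es k (u x)))"
    by (rule sum2_cong) (simp add: inner)
  also have "\<dots> = (gt s s' s'' \<circ> u) x"
    unfolding gtilde_def by (simp add: ract_sum_r)
  finally show "gt s s' (s'' \<circ> u) x = (gt s s' s'' \<circ> u) x" .
qed

end



lemma ab_trans_eq: "((u::'a::ab_group_add) - v) + (v - w) = u - w" by simp

lemma rtrans: "u - v \<in> tensor_rels X Y rx ly \<Longrightarrow> v - w \<in> tensor_rels X Y rx ly \<Longrightarrow> u - w \<in> tensor_rels X Y rx ly"
  using tensor_rels.add[of "u - v" X Y rx ly "v - w"] by (simp only: ab_trans_eq)

lemma rsym: "u - v \<in> tensor_rels X Y rx ly \<Longrightarrow> v - u \<in> tensor_rels X Y rx ly"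
  using tensor_rels.neg[of "u - v" X Y rx ly] by (simp only: minus_diff_eq)

lemma rsumd: "(\<And>a. a \<in> A \<Longrightarrow> f a - h a \<in> tensor_rels X Y rx ly) \<Longrightarrow> sum f A - sum h A \<in> tensor_rels X Y rx ly"
  using rels_sum[of A "\<lambda>a. f a - h a" X Y rx ly] by (simp only: sum_subtractf)

lemma reorder3: "(\<Sum>a\<in>A. \<Sum>j\<in>B. \<Sum>k\<in>C. f a j k) = (\<Sum>j\<in>B. \<Sum>k\<in>C. \<Sum>a\<in>A. f a j k)"
  by (rule trans[OF sum.swap], rule sum.cong[OF refl], rule sum.swap)

lemma split_right3:
  assumes "finite A" "finite B" "finite C" "0 \<in> Y" "\<And>a b. a\<in>Y \<Longrightarrow> b\<in>Y \<Longrightarrow> a+b \<in> Y"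
    "\<And>a j k. a\<in>A \<Longrightarrow> j\<in>B \<Longrightarrow> k\<in>C \<Longrightarrow> y a j k \<in> Y" "x \<in> X"
  shows "fsingle (x, \<Sum>a\<in>A. \<Sum>j\<in>B. \<Sum>k\<in>C. y a j k) - (\<Sum>a\<in>A. \<Sum>j\<in>B. \<Sum>k\<in>C. fsingle (x, y a j k)) \<in> tensor_rels X Y rx ly"
proof (rule rtrans)
  show "fsingle (x, \<Sum>a\<in>A. \<Sum>j\<in>B. \<Sum>k\<in>C. y a j k) - (\<Sum>a\<in>A. fsingle (x, \<Sum>j\<in>B. \<Sum>k\<in>C. y a j k)) \<in> tensor_rels X Y rx ly"
    using assms by (intro split_right sum_closed) auto
  show "(\<Sum>a\<in>A. fsingle (x, \<Sum>j\<in>B. \<Sum>k\<in>C. y a j k)) - (\<Sum>a\<in>A. \<Sum>j\<in>B. \<Sum>k\<in>C. fsingle (x, y a j k)) \<in> tensor_rels X Y rx ly"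
  proof (rule rsumd)
    fix a assume a: "a \<in> A"
    show "fsingle (x, \<Sum>j\<in>B. \<Sum>k\<in>C. y a j k) - (\<Sum>j\<in>B. \<Sum>k\<in>C. fsingle (x, y a j k)) \<in> tensor_rels X Y rx ly"
    proof (rule rtrans)
      show "fsingle (x, \<Sum>j\<in>B. \<Sum>k\<in>C. y a j k) - (\<Sum>j\<in>B. fsingle (x, \<Sum>k\<in>C. y a j k)) \<in> tensor_rels X Y rx ly"
        using assms a by (intro split_right sum_closed) auto
      show "(\<Sum>j\<in>B. fsingle (x, \<Sum>k\<in>C. y a j k)) - (\<Sum>j\<in>B. \<Sum>k\<in>C. fsingle (x, y a j k)) \<in> tensor_rels X Y rx ly"
        using assms a by (intro rsumd split_right) auto
    qed
  qed
qed

lemma split_left3: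
  assumes "finite A" "finite B" "finite C" "0 \<in> X" "\<And>a b. a\<in>X \<Longrightarrow> b\<in>X \<Longrightarrow> a+b \<in> X"
    "\<And>a j k. a\<in>A \<Longrightarrow> j\<in>B \<Longrightarrow> k\<in>C \<Longrightarrow> x a j k \<in> X" "y \<in> Y"
  shows "fsingle (\<Sum>a\<in>A. \<Sum>j\<in>B. \<Sum>k\<in>C. x a j k, y) - (\<Sum>a\<in>A. \<Sum>j\<in>B. \<Sum>k\<in>C. fsingle (x a j k, y)) \<in> tensor_rels X Y rx ly"
proof (rule rtrans)
  show "fsingle (\<Sum>a\<in>A. \<Sum>j\<in>B. \<Sum>k\<in>C. x a j k, y) - (\<Sum>a\<in>A. fsingle (\<Sum>j\<in>B. \<Sum>k\<in>C. x a j k, y)) \<in> tensor_rels X Y rx ly"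
    using assms by (intro split_left sum_closed) auto
  show "(\<Sum>a\<in>A. fsingle (\<Sum>j\<in>B. \<Sum>k\<in>C. x a j k, y)) - (\<Sum>a\<in>A. \<Sum>j\<in>B. \<Sum>k\<in>C. fsingle (x a j k, y)) \<in> tensor_rels X Y rx ly"
  proof (rule rsumd)
    fix a assume a: "a \<in> A"
    show "fsingle (\<Sum>j\<in>B. \<Sum>k\<in>C. x a j k, y) - (\<Sum>j\<in>B. \<Sum>k\<in>C. fsingle (x a j k, y)) \<in> tensor_rels X Y rx ly"
    proof (rule rtrans)
      show "fsingle (\<Sum>j\<in>B. \<Sum>k\<in>C. x a j k, y) - (\<Sum>j\<in>B. fsingle (\<Sum>k\<in>C. x a j k, y)) \<in> tensor_rels X Y rx ly"
        using assms a by (intro split_left sum_closed) auto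
      show "(\<Sum>j\<in>B. fsingle (\<Sum>k\<in>C. x a j k, y)) - (\<Sum>j\<in>B. \<Sum>k\<in>C. fsingle (x a j k, y)) \<in> tensor_rels X Y rx ly"
        using assms a by (intro rsumd split_left) auto
    qed
  qed
qed

lemma formal_upt: "formal (map f [0..<n]) = (\<Sum>a<n. fsingle (f a))"
  by (induction n) simp_all

definition tens :: "('m \<Rightarrow> 'a \<Rightarrow> 'm) \<Rightarrow> 'm \<Rightarrow> ('m \<Rightarrow> 'a) \<Rightarrow> 'm \<Rightarrow> 'm" where
  "tens ract p \<phi> = (\<lambda>x. ract p (\<phi> x))"




context pc begin

abbreviation "relD \<equiv> tensor_rels (endo ract) (endo ract) (\<lambda>s b. s \<circ> lact b) (\<lambda>b s. lact b \<circ> s)"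

lemma endo_tens': "\<phi> \<in> dual ract \<Longrightarrow> tens ract p \<phi> \<in> endo ract"
  unfolding tens_def by (rule endo_tens)

lemma push_P:
  assumes i: "i < n" and j: "j < n" and k: "k < n" and s: "s \<in> endo ract" and w: "w \<in> endo ract" and v: "v \<in> endo ract"
  shows "(\<Sum>a<n. fsingle (tens ract (s (e i)) (es i), tens ract (ract (e a) (g (es a) (w (e j)) (es j) (v (e k)))) (es k)))
       - (\<Sum>a<n. fsingle (tens ract (s (e i)) (\<lambda>x. g (es i) (w (e j)) (es j) (e a) * es a x), tens ract (v (e k)) (es k)))
       \<in> relD"
proof -
  have c: "tensorC lact ract
          [(\<phi>, ract (e a) (g (es a) m \<phi>' m')). (\<phi>, m) \<leftarrow> [(es i, w (e j))], (\<phi>', m') \<leftarrow> [(es j, v (e k))], a \<leftarrow> [0..<n]]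
          [(\<lambda>x. g \<phi> m \<phi>' (e a) * es a x, m'). (\<phi>, m) \<leftarrow> [(es i, w (e j))], (\<phi>', m') \<leftarrow> [(es j, v (e k))], a \<leftarrow> [0..<n]]"
    by (rule g_coint) (simp_all add: es_dual i j)
  have c2: "tensor_eq (dual ract) UNIV (\<lambda>\<phi> b. \<lambda>x. \<phi> (lact b x)) lact
          (map (\<lambda>a. (es i, ract (e a) (g (es a) (w (e j)) (es j) (v (e k))))) [0..<n])
          (map (\<lambda>a. (\<lambda>x. g (es i) (w (e j)) (es j) (e a) * es a x, v (e k))) [0..<n])"
    using c unfolding tensorC_def by (simp add: map_concat)
  have p: "formal (map (\<lambda>(x,y). (tens ract (s (e i)) x, tens ract y (es k)))
             (map (\<lambda>a. (es i, ract (e a) (g (es a) (w (e j)) (es j) (v (e k))))) [0..<n]))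
         - formal (map (\<lambda>(x,y). (tens ract (s (e i)) x, tens ract y (es k)))
             (map (\<lambda>a. (\<lambda>x. g (es i) (w (e j)) (es j) (e a) * es a x, v (e k))) [0..<n])) \<in> relD"
  proof (rule tensor_eq_push[OF c2])
    fix x assume "x \<in> dual ract" then show "tens ract (s (e i)) x \<in> endo ract" by (rule endo_tens')
  next
    fix y :: 'm show "tens ract y (es k) \<in> endo ract" by (rule endo_tens'[OF es_dual[OF k]])
  next
    fix x x' show "tens ract (s (e i)) (x + x') = tens ract (s (e i)) x + tens ract (s (e i)) x'"
      unfolding tens_def by (rule ext) (simp add: ract_addr)
  next
    fix y y' :: 'm show "tens ract (y + y') (es k) = tens ract y (es k) + tens ract y' (es k)"
      unfolding tens_def by (rule ext) (simp add: ract_addl)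
  next
    fix x and r :: 'b show "tens ract (s (e i)) (\<lambda>xa. x (lact r xa)) = tens ract (s (e i)) x \<circ> lact r"
      unfolding tens_def by (rule ext) simp
  next
    fix y and r :: 'b show "tens ract (lact r y) (es k) = lact r \<circ> tens ract y (es k)"
      unfolding tens_def by (rule ext) (simp add: lact_ract)
  qed
  then show ?thesis by (simp add: formal_upt)
qed


lemma core:
  assumes s: "s \<in> endo ract" and w: "w \<in> endo ract" and v: "v \<in> endo ract"
  shows "fsingle (s, gt id w v) - fsingle (gt s w id, v) \<in> relD"
proof -
  define T where "T i = tens ract (s (e i)) (es i)" for i
  define U where "U a j k = tens ract (ract (e a) (g (es a) (w (e j)) (es j) (v (e k)))) (es k)" for a j k
  define V where "V i j a = tens ract (s (e i)) (\<lambda>x. g (es i) (w (e j)) (es j) (e a) * es a x)" for i j a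
  define W where "W k = tens ract (v (e k)) (es k)" for k
  define G where "G = gt id w v"
  define H where "H = gt s w id"
  have T_in: "T i \<in> endo ract" if "i < n" for i unfolding T_def by (rule endo_tens'[OF es_dual[OF that]])
  have U_in: "U a j k \<in> endo ract" if "k < n" for a j k unfolding U_def by (rule endo_tens'[OF es_dual[OF that]])
  have V_in: "V i j a \<in> endo ract" if "a < n" for i j a unfolding V_def by (rule endo_tens'[OF dual_smul[OF es_dual[OF that]]])
  have W_in: "W k \<in> endo ract" if "k < n" for k unfolding W_def by (rule endo_tens'[OF es_dual[OF that]])
  have F1: "s = (\<Sum>i<n. T i)"
  proof (rule ext)
    fix x show "s x = (\<Sum>i<n. T i) x"
      by (simp only: sum_fun_apply T_def tens_def) (rule endo_exp[OF s])
  qed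
  have F4: "v = (\<Sum>k<n. W k)"
  proof (rule ext)
    fix x show "v x = (\<Sum>k<n. W k) x"
      by (simp only: sum_fun_apply W_def tens_def) (rule endo_exp[OF v])
  qed
  have F2: "G = (\<Sum>a<n. \<Sum>j<n. \<Sum>k<n. U a j k)"
    by (rule ext) (simp add: G_def gtilde_def U_def tens_def sum_fun_apply ract_mult)
  have F3: "H = (\<Sum>i<n. \<Sum>j<n. \<Sum>a<n. V i j a)"
    by (rule ext) (simp add: H_def gtilde_def V_def tens_def sum_fun_apply)
  have cl0: "0 \<in> endo ract" by (rule endo_0)
  have clp: "\<And>a b. a \<in> endo ract \<Longrightarrow> b \<in> endo ract \<Longrightarrow> a + b \<in> endo ract" by (rule endo_plus)
  have G_in: "G \<in> endo ract" unfolding G_def by (rule gt_endo)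
  have H_in: "H \<in> endo ract" unfolding H_def by (rule gt_endo)

  have s1: "fsingle (s, G) - (\<Sum>i<n. fsingle (T i, G)) \<in> relD"
  proof -
    have "fsingle (\<Sum>i<n. T i, G) - (\<Sum>i<n. fsingle (T i, G)) \<in> relD"
      by (rule split_left) (auto simp: cl0 clp T_in G_in)
    then show ?thesis by (simp only: F1[symmetric])
  qed
  have s2: "(\<Sum>i<n. fsingle (T i, G)) - (\<Sum>i<n. \<Sum>a<n. \<Sum>j<n. \<Sum>k<n. fsingle (T i, U a j k)) \<in> relD"
  proof (rule rsumd)
    fix i assume "i \<in> {..<n}"
    then have i: "i < n" by simp
    have "fsingle (T i, \<Sum>a<n. \<Sum>j<n. \<Sum>k<n. U a j k) - (\<Sum>a<n. \<Sum>j<n. \<Sum>k<n. fsingle (T i, U a j k)) \<in> relD"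
      by (rule split_right3) (auto simp: cl0 clp U_in T_in i)
    then show "fsingle (T i, G) - (\<Sum>a<n. \<Sum>j<n. \<Sum>k<n. fsingle (T i, U a j k)) \<in> relD"
      by (simp only: F2)
  qed
  have s3: "(\<Sum>i<n. \<Sum>a<n. \<Sum>j<n. \<Sum>k<n. fsingle (T i, U a j k)) = (\<Sum>i<n. \<Sum>j<n. \<Sum>k<n. \<Sum>a<n. fsingle (T i, U a j k))"
    by (rule sum.cong[OF refl], rule reorder3)
  have s4: "(\<Sum>i<n. \<Sum>j<n. \<Sum>k<n. \<Sum>a<n. fsingle (T i, U a j k)) - (\<Sum>i<n. \<Sum>j<n. \<Sum>k<n. \<Sum>a<n. fsingle (V i j a, W k)) \<in> relD"
  proof (rule rsumd, rule rsumd, rule rsumd)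
    fix i j k assume "i \<in> {..<n}" "j \<in> {..<n}" "k \<in> {..<n}"
    then have i: "i < n" and j: "j < n" and k: "k < n" by simp_all
    show "(\<Sum>a<n. fsingle (T i, U a j k)) - (\<Sum>a<n. fsingle (V i j a, W k)) \<in> relD"
      unfolding T_def U_def V_def W_def by (rule push_P[OF i j k s w v])
  qed
  have s5: "fsingle (H, v) - (\<Sum>k<n. fsingle (H, W k)) \<in> relD"
  proof -
    have "fsingle (H, \<Sum>k<n. W k) - (\<Sum>k<n. fsingle (H, W k)) \<in> relD"
      by (rule split_right) (auto simp: cl0 clp W_in H_in)
    then show ?thesis by (simp only: F4[symmetric])
  qed
  have s6: "(\<Sum>k<n. fsingle (H, W k)) - (\<Sum>k<n. \<Sum>i<n. \<Sum>j<n. \<Sum>a<n. fsingle (V i j a, W k)) \<in> relD"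
  proof (rule rsumd)
    fix k assume "k \<in> {..<n}"
    then have k: "k < n" by simp
    have "fsingle (\<Sum>i<n. \<Sum>j<n. \<Sum>a<n. V i j a, W k) - (\<Sum>i<n. \<Sum>j<n. \<Sum>a<n. fsingle (V i j a, W k)) \<in> relD"
      by (rule split_left3) (auto simp: cl0 clp V_in W_in k)
    then show "fsingle (H, W k) - (\<Sum>i<n. \<Sum>j<n. \<Sum>a<n. fsingle (V i j a, W k)) \<in> relD"
      by (simp only: F3)
  qed
  have s7: "(\<Sum>k<n. \<Sum>i<n. \<Sum>j<n. \<Sum>a<n. fsingle (V i j a, W k)) = (\<Sum>i<n. \<Sum>j<n. \<Sum>k<n. \<Sum>a<n. fsingle (V i j a, W k))"
    by (rule reorder3)
  have "fsingle (s, G) - (\<Sum>i<n. \<Sum>j<n. \<Sum>k<n. \<Sum>a<n. fsingle (V i j a, W k)) \<in> relD"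
    by (rule rtrans[OF s1 rtrans[OF s2[unfolded s3] s4]])
  moreover have "(\<Sum>i<n. \<Sum>j<n. \<Sum>k<n. \<Sum>a<n. fsingle (V i j a, W k)) - fsingle (H, v) \<in> relD"
    by (rule rtrans[OF rsym[OF s6[unfolded s7]] rsym[OF s5]])
  ultimately have "fsingle (s, G) - fsingle (H, v) \<in> relD" by (rule rtrans)
  then show ?thesis unfolding G_def H_def .
qed


lemma formal_concat_diff:
  "(\<And>x. x \<in> set xs \<Longrightarrow> formal (f x) - formal (h x) \<in> tensor_rels X Y rx ly) \<Longrightarrow>
   formal (concat (map f xs)) - formal (concat (map h xs)) \<in> tensor_rels X Y rx ly"
proof (induction xs)
  case Nil then show ?case using tensor_rels.zero[of X Y rx ly] by (simp only: list.map concat.simps formal_Nil diff_self)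
next
  case (Cons a xs)
  have a1: "formal (f a) - formal (h a) \<in> tensor_rels X Y rx ly" by (rule Cons.prems) simp
  have a2: "formal (concat (map f xs)) - formal (concat (map h xs)) \<in> tensor_rels X Y rx ly"
    by (rule Cons.IH) (rule Cons.prems, simp)
  have "formal (f a) - formal (h a) + (formal (concat (map f xs)) - formal (concat (map h xs))) \<in> tensor_rels X Y rx ly"
    by (rule tensor_rels.add[OF a1 a2])
  then show ?case by (simp only: list.map concat.simps formal_append add_diff_add_ab)
qed

lemma formal_map_diff:
  "(\<And>x. x \<in> set xs \<Longrightarrow> fsingle (f x) - fsingle (h x) \<in> tensor_rels X Y rx ly) \<Longrightarrow>
   formal (map f xs) - formal (map h xs) \<in> tensor_rels X Y rx ly"
proof (induction xs)
  case Nil then show ?case using tensor_rels.zero[of X Y rx ly] by (simp only: list.map formal_Nil diff_self)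
next
  case (Cons a xs)
  have a1: "fsingle (f a) - fsingle (h a) \<in> tensor_rels X Y rx ly" by (rule Cons.prems) simp
  have a2: "formal (map f xs) - formal (map h xs) \<in> tensor_rels X Y rx ly"
    by (rule Cons.IH) (rule Cons.prems, simp)
  have "fsingle (f a) - fsingle (h a) + (formal (map f xs) - formal (map h xs)) \<in> tensor_rels X Y rx ly"
    by (rule tensor_rels.add[OF a1 a2])
  then show ?case by (simp only: list.map formal_Cons add_diff_add_ab)
qed

lemma main9: "\<forall>ds ds'. set ds \<subseteq> endo ract \<times> endo ract \<longrightarrow> set ds' \<subseteq> endo ract \<times> endo ract \<longrightarrow>
        tensorD lact ract
          [(s, gt id (t \<circ> u) v). (s, t) \<leftarrow> ds, (u, v) \<leftarrow> ds']
          [(gt s (t \<circ> u) id, v). (s, t) \<leftarrow> ds, (u, v) \<leftarrow> ds']"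
proof (intro allI impI)
  fix ds ds' :: "(('m \<Rightarrow> 'm) \<times> ('m \<Rightarrow> 'm)) list"
  assume ds: "set ds \<subseteq> endo ract \<times> endo ract" and ds': "set ds' \<subseteq> endo ract \<times> endo ract"
  show "tensorD lact ract [(s, gt id (t \<circ> u) v). (s, t) \<leftarrow> ds, (u, v) \<leftarrow> ds']
          [(gt s (t \<circ> u) id, v). (s, t) \<leftarrow> ds, (u, v) \<leftarrow> ds']"
    unfolding tensorD_def tensor_eq_def
  proof (rule formal_concat_diff)
    fix x assume x: "x \<in> set ds"
    obtain s t where st: "x = (s, t)" by (cases x)
    with x ds have s: "s \<in> endo ract" and t: "t \<in> endo ract" by auto
    show "formal ((\<lambda>(s, t). map (\<lambda>(u, v). (s, gt id (t \<circ> u) v)) ds') x) -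
          formal ((\<lambda>(s, t). map (\<lambda>(u, v). (gt s (t \<circ> u) id, v)) ds') x) \<in> relD"
      unfolding st prod.case
    proof (rule formal_map_diff)
      fix y assume y: "y \<in> set ds'"
      obtain u v where uv: "y = (u, v)" by (cases y)
      with y ds' have u: "u \<in> endo ract" and v: "v \<in> endo ract" by auto
      show "fsingle ((\<lambda>(u, v). (s, gt id (t \<circ> u) v)) y) - fsingle ((\<lambda>(u, v). (gt s (t \<circ> u) id, v)) y) \<in> relD"
        unfolding uv prod.case by (rule core[OF s endo_comp[OF t u] v])
    qed
  qed
qed

lemma main: "sweedler_precointegral lact ract gt"
  unfolding sweedler_precointegral_def
  apply (intro conjI ballI)
  apply (rule gt_endo)
  apply (rule gt_add1)
  apply (rule gt_add2)
  apply (rule gt_add3)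
  apply (intro allI, rule gt_bal1; assumption)
  apply (intro allI, rule gt_bal2; assumption)
  apply (rule gt_comp1; assumption)
  apply (rule gt_comp3; assumption)
  apply (rule main9)
  done

end

theorem lemma3p4:
  fixes lact :: "'b::ring_1 \<Rightarrow> 'm::ab_group_add \<Rightarrow> 'm"
    and ract :: "'m \<Rightarrow> 'a::ring_1 \<Rightarrow> 'm"
    and n :: nat and e :: "nat \<Rightarrow> 'm" and es :: "nat \<Rightarrow> 'm \<Rightarrow> 'a"
    and g :: "('m \<Rightarrow> 'a) \<Rightarrow> 'm \<Rightarrow> ('m \<Rightarrow> 'a) \<Rightarrow> 'm \<Rightarrow> 'a"
  assumes "bimodule lact ract"
    and "dual_basis ract n e es"
    and "comatrix_precointegral lact ract n e es g"
  shows "sweedler_precointegral lact ract (gtilde ract n e es g)"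
proof -
  interpret pc lact ract n e es g using assms by unfold_locales
  show ?thesis by (rule main)
qed


end
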